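(* Let $q\ge 2$ and $n\ge 2$. If there is an ordering of all words of $\mathbb{Z}_q^{n-1}$ in which consecutive words have Hamming distance $1$, starting with $(0,\ldots,0)$ and ending with $(1,\ldots,1)$, then a quasi-complementary Hamming metric Gray code of $q$-ary $n$-tuples exists. Likewise, if there is such an ordering of $\mathbb{Z}_q^{n-1}$ in which consecutive words have Lee distance $1$, starting with $(0,\ldots,0)$ and ending with $(1,\ldots,1)$, then a quasi-complementary Lee metric Gray code of $q$-ary $n$-tuples exists.
   Context: Hamming distance between two words is the number of coordinates in which they differ. Lee distance between $v,u\in\mathbb{Z}_q^n$ is $\sum_{i}\min\{|v_i-u_i|,q-|v_i-u_i|\}$ (entries regarded as integers in $\{0,\ldots,q-1\}$). A quasi-complementary Hamming (resp. Lee) metric Gray code of $q$-ary $n$-tuples is an ordering $G(0),\ldots,G(q^n-1)$ of all words of $\mathbb{Z}_q^n$ such that consecutive words $G(i),G(i+1)$ ($0\le i<q^n-1$) have Hamming (resp. Lee) distance $1$, and $G((i+q^{n-1})\bmod q^n)=G(i)+(1,1,\ldots,1)$ for all $i$, with addition in $\mathbb{Z}_q^n$. *)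

theory Defs
  imports Main
begin

text \<open>Words of Z_q^n are represented as lists of naturals of length n with entries < q.\<close>

definition words :: "nat \<Rightarrow> nat \<Rightarrow> nat list set" where
  "words q n = {w. length w = n \<and> (\<forall>x\<in>set w. x < q)}"

definition hamming_dist :: "nat list \<Rightarrow> nat list \<Rightarrow> nat" where
  "hamming_dist u v = card {i. i < length u \<and> u ! i \<noteq> v ! i}"

definition lee_dist :: "nat \<Rightarrow> nat list \<Rightarrow> nat list \<Rightarrow> nat" where
  "lee_dist q u v =
     (\<Sum>i<length u. min (nat \<bar>int (u ! i) - int (v ! i)\<bar>) (q - nat \<bar>int (u ! i) - int (v ! i)\<bar>))"

definition add_ones :: "nat \<Rightarrow> nat list \<Rightarrow> nat list" where
  "add_ones q w = map (\<lambda>x. (x + 1) mod q) w"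

definition is_ordering :: "nat \<Rightarrow> nat \<Rightarrow> (nat \<Rightarrow> nat list) \<Rightarrow> bool" where
  "is_ordering q n G \<longleftrightarrow> bij_betw G {..<q ^ n} (words q n)"

definition is_gray_ordering :: "(nat list \<Rightarrow> nat list \<Rightarrow> nat) \<Rightarrow> nat \<Rightarrow> nat \<Rightarrow> (nat \<Rightarrow> nat list) \<Rightarrow> bool" where
  "is_gray_ordering d q n G \<longleftrightarrow> is_ordering q n G \<and>
     (\<forall>i. i + 1 < q ^ n \<longrightarrow> d (G i) (G (i + 1)) = 1)"

definition quasi_complementary_gray :: "(nat list \<Rightarrow> nat list \<Rightarrow> nat) \<Rightarrow> nat \<Rightarrow> nat \<Rightarrow> (nat \<Rightarrow> nat list) \<Rightarrow> bool" where
  "quasi_complementary_gray d q n G \<longleftrightarrow> is_gray_ordering d q n G \<and>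
     (\<forall>i < q ^ n. G ((i + q ^ (n - 1)) mod q ^ n) = add_ones q (G i))"

end

theory Submission
  imports Defs
begin

definition shw :: "nat \<Rightarrow> nat \<Rightarrow> nat list \<Rightarrow> nat list" where
  "shw q k w = map (\<lambda>x. (x + k) mod q) w"

lemma shw_words: "q > 0 \<Longrightarrow> w \<in> words q m \<Longrightarrow> shw q k w \<in> words q m"
  by (auto simp: shw_def words_def)

lemma shw_0: "w \<in> words q m \<Longrightarrow> shw q 0 w = w"
  by (auto simp: shw_def words_def intro!: map_idI)

lemma shw_q: "w \<in> words q m \<Longrightarrow> shw q q w = w"
  by (auto simp: shw_def words_def intro!: map_idI)

lemma e1: "((x + b) mod q + a) mod q = (x + (a + b)) mod (q::nat)"
  by (simp only: mod_add_left_eq add.assoc add.commute[of b a])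

lemma e2: "((x + k) mod q + 1) mod q = (x + Suc k) mod (q::nat)"
  by (simp only: mod_add_left_eq Suc_eq_plus1 add.assoc)

lemma shw_shw: "shw q a (shw q b w) = shw q (a + b) w"
  by (simp only: shw_def map_map o_def e1)

lemma add_ones_shw: "add_ones q (shw q k w) = shw q (Suc k) w"
  by (simp only: shw_def add_ones_def map_map o_def e2)

lemma add_ones_app: "add_ones q (x @ [c]) = add_ones q x @ [Suc c mod q]"
  by (simp add: add_ones_def)

lemma aux: "(q::nat) > 0 \<Longrightarrow> (a + k + (q - k mod q)) mod q = a mod q"
proof -
  assume q: "q > 0"
  have "k mod q < q" using q by simp
  moreover have "k = q * (k div q) + k mod q" by simp
  ultimately have "a + k + (q - k mod q) = a + q * (k div q) + q" by linarith
  then have "(a + k + (q - k mod q)) mod q = (a + (k div q + 1) * q) mod q" by (simp add: algebra_simps)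
  then show ?thesis by (metis mod_mult_self1)
qed
lemma mod_shift_inj: "(a::nat) < q \<Longrightarrow> b < q \<Longrightarrow> (a + k) mod q = (b + k) mod q \<Longrightarrow> a = b"
proof -
  assume a: "a < q" and b: "b < q" and e: "(a + k) mod q = (b + k) mod q"
  have "(a + k + (q - k mod q)) mod q = (b + k + (q - k mod q)) mod q"
    using e by (metis mod_add_left_eq)
  then show "a = b" using aux[of q a k] aux[of q b k] a b by simp
qed

lemma shw_inj: "u \<in> words q m \<Longrightarrow> v \<in> words q m \<Longrightarrow> shw q k u = shw q k v \<Longrightarrow> u = v"
proof -
  assume u: "u \<in> words q m" and v: "v \<in> words q m" and e: "shw q k u = shw q k v"
  show "u = v"
  proof (rule nth_equalityI)
    show "length u = length v" using u v by (simp add: words_def)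
    fix i assume i: "i < length u"
    then have "u ! i < q" "v ! i < q" using u v by (auto simp: words_def)
    moreover have "(u ! i + k) mod q = (v ! i + k) mod q"
      using e i \<open>length u = length v\<close> by (metis nth_map shw_def)
    ultimately show "u ! i = v ! i" by (rule mod_shift_inj)
  qed
qed

lemma gen:
  fixes d :: "nat list \<Rightarrow> nat list \<Rightarrow> nat"
  assumes q2: "q \<ge> 2" and gH: "is_gray_ordering d q m H"
    and H0: "H 0 = replicate m 0" and HN: "H (q ^ m - 1) = replicate m 1"
    and dsh: "\<And>u v k c. u \<in> words q m \<Longrightarrow> v \<in> words q m \<Longrightarrow> d (shw q k u @ [c]) (shw q k v @ [c]) = d u v"
    and dst: "\<And>u k. u \<in> words q m \<Longrightarrow> k + 1 < q \<Longrightarrow> d (u @ [k]) (u @ [k+1]) = 1"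
  shows "\<exists>G. quasi_complementary_gray d q (Suc m) G"
proof -
  define N where "N = q ^ m"
  have Np: "N > 0" using q2 by (simp add: N_def)
  have bijH: "bij_betw H {..<N} (words q m)" using gH by (simp add: is_gray_ordering_def is_ordering_def N_def)
  have Hw: "\<And>j. j < N \<Longrightarrow> H j \<in> words q m" using bijH by (auto simp: bij_betw_def)
  have Hd: "\<And>j. j + 1 < N \<Longrightarrow> d (H j) (H (j+1)) = 1" using gH by (simp add: is_gray_ordering_def N_def)
  define G where "G i = shw q (i div N) (H (i mod N)) @ [i div N]" for i
  have qN: "q ^ Suc m = q * N" by (simp add: N_def)
  have bij: "bij_betw G {..<q ^ Suc m} (words q (Suc m))"
  proof (rule bij_betw_imageI)
    show "inj_on G {..<q ^ Suc m}"
    proof (rule inj_onI)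
      fix i i' assume "i \<in> {..<q ^ Suc m}" "i' \<in> {..<q ^ Suc m}" and e: "G i = G i'"
      have k: "i div N = i' div N" using e by (simp add: G_def)
      have "shw q (i div N) (H (i mod N)) = shw q (i div N) (H (i' mod N))"
        using e k by (simp add: G_def)
      then have "H (i mod N) = H (i' mod N)" using shw_inj Hw Np by (meson mod_less_divisor)
      then have "i mod N = i' mod N" using bijH Np unfolding bij_betw_def inj_on_def by auto
      then show "i = i'" using k by (metis div_mult_mod_eq)
    qed
    show "G ` {..<q ^ Suc m} = words q (Suc m)"
    proof
      show "G ` {..<q ^ Suc m} \<subseteq> words q (Suc m)"
      proof
        fix w assume "w \<in> G ` {..<q ^ Suc m}"
        then obtain i where i: "i < q * N" and w: "w = G i" using qN by auto
        have "i div N < q" using i by (simp add: div_less_iff_less_mult mult.commute Np)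
        moreover have "shw q (i div N) (H (i mod N)) \<in> words q m" using shw_words Hw Np q2 by simp
        ultimately show "w \<in> words q (Suc m)" by (auto simp: w G_def words_def)
      qed
    next
      show "words q (Suc m) \<subseteq> G ` {..<q ^ Suc m}"
      proof
        fix w assume w: "w \<in> words q (Suc m)"
        have "w \<noteq> []" using w by (auto simp: words_def)
        then have "w = butlast w @ [last w]" by simp
        then obtain u k where wu: "w = u @ [k]" by blast
        have kq: "k < q" and u: "u \<in> words q m" using w by (auto simp: wu words_def)
        define u' where "u' = shw q (q - k) u"
        have u': "u' \<in> words q m" using u q2 by (simp add: u'_def shw_words)
        obtain j where j: "j < N" "H j = u'" using bijH u' unfolding bij_betw_def by (metis imageE lessThan_iff)
        have "shw q k u' = u" using kq u by (simp add: u'_def shw_shw shw_q)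
        define i where "i = k * N + j"
        have idiv: "i div N = k" and imod: "i mod N = j" using j Np by (simp_all add: i_def)
        have "i < q * N"
        proof -
          have "i < (k+1) * N" using j by (simp add: i_def)
          also have "\<dots> \<le> q * N" using kq by (intro mult_le_mono1) simp
          finally show ?thesis .
        qed
        moreover have "G i = w" using \<open>shw q k u' = u\<close> j by (simp add: G_def idiv imod wu)
        ultimately show "w \<in> G ` {..<q ^ Suc m}" using qN by (metis image_eqI lessThan_iff)
      qed
    qed
  qed
  have steps: "\<forall>i. i + 1 < q ^ Suc m \<longrightarrow> d (G i) (G (i + 1)) = 1"
  proof (intro allI impI)
    fix i assume i: "i + 1 < q ^ Suc m"
    define k where "k = i div N"
    define j where "j = i mod N"
    have ij: "i = k * N + j" by (simp add: k_def j_def)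
    have jN: "j < N" using Np by (simp add: j_def)
    show "d (G i) (G (i + 1)) = 1"
    proof (cases "j + 1 < N")
      case True
      have e: "i + 1 = (j + 1) + k * N" by (simp add: ij)
      have "(i+1) div N = k" using True Np unfolding e by (subst div_mult_self1) auto
      moreover have "(i+1) mod N = j + 1" using True Np unfolding e by (subst mod_mult_self1) auto
      ultimately show ?thesis using dsh Hw Hd True jN
        by (simp add: G_def k_def[symmetric] j_def[symmetric])
    next
      case False
      then have jj: "j = N - 1" using jN by simp
      have i1: "i + 1 = (k+1) * N" using Np by (simp add: ij jj)
      have "(k+1) * N < q * N" using i unfolding i1 qN .
      then have "0 < N \<and> k + 1 < q" by (simp only: mult_less_cancel2)
      then have kq: "k + 1 < q" by (rule conjunct2)
      have d1: "(i+1) div N = k+1" "(i+1) mod N = 0" using Np unfolding i1 by simp_all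
      have "H j = replicate m 1" using HN jj by (simp add: N_def)
      then have a: "shw q k (H j) = replicate m (k+1)" using kq by (simp add: shw_def)
      have b: "shw q (k+1) (H 0) = replicate m (k+1)" using kq H0 by (simp add: shw_def)
      have "replicate m (k+1) \<in> words q m" using kq by (simp add: words_def)
      then show ?thesis using dst kq a b d1
        by (simp add: G_def k_def[symmetric] j_def[symmetric])
    qed
  qed
  have qc: "\<forall>i < q ^ Suc m. G ((i + q ^ (Suc m - 1)) mod q ^ Suc m) = add_ones q (G i)"
  proof (intro allI impI)
    fix i assume i: "i < q ^ Suc m"
    define k where "k = i div N"
    define j where "j = i mod N"
    have ij: "i = k * N + j" by (simp add: k_def j_def)
    have jN: "j < N" using Np by (simp add: j_def)
    have iN: "i < q * N" using i unfolding qN .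
    have kq: "k < q" unfolding k_def using iN Np by (simp add: div_less_iff_less_mult)
    have ao: "add_ones q (G i) = shw q (Suc k) (H j) @ [Suc k mod q]"
      unfolding G_def k_def[symmetric] j_def[symmetric] add_ones_app add_ones_shw by simp
    show "G ((i + q ^ (Suc m - 1)) mod q ^ Suc m) = add_ones q (G i)"
    proof (cases "Suc k < q")
      case True
      have "i + N < q * N"
      proof -
        have "i + N < (k+2) * N" using jN by (simp add: ij)
        also have "\<dots> \<le> q * N" using True by (intro mult_le_mono1) simp
        finally show ?thesis .
      qed
      then have e: "(i + q ^ (Suc m - 1)) mod q ^ Suc m = i + N" using qN by (simp add: N_def)
      have e2: "i + N = j + Suc k * N" by (simp add: ij)
      have "(i+N) div N = Suc k" using Np jN unfolding e2 by (subst div_mult_self1) auto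
      moreover have "(i+N) mod N = j" using Np jN unfolding e2 by (subst mod_mult_self1) auto
      ultimately show ?thesis unfolding e ao unfolding G_def using True by simp
    next
      case False
      then have kk: "Suc k = q" using kq by simp
      have "i + N = Suc k * N + j" by (simp add: ij)
      then have "i + N = q * N + j" unfolding kk .
      have "N \<le> q * N" using q2 by simp
      then have jqN: "j < q * N" using jN by linarith
      from \<open>i + N = q * N + j\<close> have e: "(i + q ^ (Suc m - 1)) mod q ^ Suc m = j" using qN jqN by (simp add: N_def)
      have "shw q 0 (H j) = H j" using Hw[OF jN] by (rule shw_0)
      then have "G j = H j @ [0]" using jN Np by (simp add: G_def)
      moreover have "shw q (Suc k) (H j) = H j" unfolding kk using Hw[OF jN] by (rule shw_q)
      ultimately show ?thesis unfolding e ao using kk by simp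
    qed
  qed
  show ?thesis
    unfolding quasi_complementary_gray_def is_gray_ordering_def is_ordering_def
    using bij steps qc by blast
qed

lemma ham_sh:
  assumes u: "u \<in> words q m" and v: "v \<in> words q m"
  shows "hamming_dist (shw q k u @ [c]) (shw q k v @ [c]) = hamming_dist u v"
proof -
  have lu: "length u = m" and lv: "length v = m" using u v by (auto simp: words_def)
  have "{i. i < length (shw q k u @ [c]) \<and> (shw q k u @ [c]) ! i \<noteq> (shw q k v @ [c]) ! i}
      = {i. i < length u \<and> u ! i \<noteq> v ! i}"
  proof (intro set_eqI iffI)
    fix i assume "i \<in> {i. i < length (shw q k u @ [c]) \<and> (shw q k u @ [c]) ! i \<noteq> (shw q k v @ [c]) ! i}"
    then show "i \<in> {i. i < length u \<and> u ! i \<noteq> v ! i}" using lu lv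
      by (auto simp: shw_def nth_append less_Suc_eq split: if_splits)
  next
    fix i assume i: "i \<in> {i. i < length u \<and> u ! i \<noteq> v ! i}"
    then have "u ! i < q" "v ! i < q" using u v lu lv by (auto simp: words_def)
    then have "(u ! i + k) mod q \<noteq> (v ! i + k) mod q" using i mod_shift_inj by blast
    then show "i \<in> {i. i < length (shw q k u @ [c]) \<and> (shw q k u @ [c]) ! i \<noteq> (shw q k v @ [c]) ! i}"
      using i lu lv by (auto simp: shw_def nth_append)
  qed
  then show ?thesis by (simp add: hamming_dist_def)
qed

lemma ham_st:
  assumes u: "u \<in> words q m"
  shows "hamming_dist (u @ [k]) (u @ [k + 1]) = 1"
proof -
  have lu: "length u = m" using u by (auto simp: words_def)
  have "{i. i < length (u @ [k]) \<and> (u @ [k]) ! i \<noteq> (u @ [k + 1]) ! i} = {m}"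
    using lu by (auto simp: nth_append less_Suc_eq)
  then show ?thesis by (simp add: hamming_dist_def)
qed

definition lf :: "nat \<Rightarrow> nat \<Rightarrow> nat \<Rightarrow> nat" where
  "lf q a b = min (nat \<bar>int a - int b\<bar>) (q - nat \<bar>int a - int b\<bar>)"

lemma lf_suc: "a < q \<Longrightarrow> b < q \<Longrightarrow> lf q (Suc a mod q) (Suc b mod q) = lf q a b"
  unfolding lf_def by (auto simp: mod_Suc)

lemma lf_shift: "a < q \<Longrightarrow> b < q \<Longrightarrow> lf q ((a + k) mod q) ((b + k) mod q) = lf q a b"
proof (induction k)
  case 0 then show ?case by simp
next
  case (Suc k)
  have q: "q > 0" using Suc by simp
  have "lf q ((a + Suc k) mod q) ((b + Suc k) mod q) = lf q (Suc ((a + k) mod q) mod q) (Suc ((b + k) mod q) mod q)"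
    by (metis add_Suc_right mod_Suc_eq)
  also have "\<dots> = lf q ((a + k) mod q) ((b + k) mod q)" using q by (intro lf_suc) auto
  finally show ?case using Suc by simp
qed

lemma lee_app:
  assumes "length x = length y"
  shows "lee_dist q (x @ [a]) (y @ [b]) = lee_dist q x y + lf q a b"
  using assms by (simp add: lee_dist_def lf_def nth_append)

lemma lee_sh:
  assumes u: "u \<in> words q m" and v: "v \<in> words q m"
  shows "lee_dist q (shw q k u @ [c]) (shw q k v @ [c]) = lee_dist q u v"
proof -
  have lu: "length u = m" and lv: "length v = m" using u v by (auto simp: words_def)
  have "lee_dist q (shw q k u @ [c]) (shw q k v @ [c]) = lee_dist q (shw q k u) (shw q k v)"
    using lu lv by (simp add: lee_app shw_def lf_def)
  also have "\<dots> = (\<Sum>i<m. lf q ((u ! i + k) mod q) ((v ! i + k) mod q))"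
    using lu lv by (simp add: lee_dist_def lf_def shw_def)
  also have "\<dots> = (\<Sum>i<m. lf q (u ! i) (v ! i))"
  proof (rule sum.cong)
    fix i assume "i \<in> {..<m}"
    then have "u ! i < q" "v ! i < q" using u v lu lv by (auto simp: words_def)
    then show "lf q ((u ! i + k) mod q) ((v ! i + k) mod q) = lf q (u ! i) (v ! i)" by (rule lf_shift)
  qed simp
  also have "\<dots> = lee_dist q u v" using lu by (simp add: lee_dist_def lf_def)
  finally show ?thesis .
qed

lemma lee_st:
  assumes u: "u \<in> words q m" and "k + 1 < q"
  shows "lee_dist q (u @ [k]) (u @ [k + 1]) = 1"
proof -
  have "lee_dist q u u = 0" by (simp add: lee_dist_def)
  then show ?thesis using assms by (simp add: lee_app lf_def)
qed

theorem lemma2: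
  fixes q n :: nat
  assumes "q \<ge> 2" and "n \<ge> 2"
  shows "((\<exists>H. is_gray_ordering hamming_dist q (n - 1) H \<and>
            H 0 = replicate (n - 1) 0 \<and> H (q ^ (n - 1) - 1) = replicate (n - 1) 1)
          \<longrightarrow> (\<exists>G. quasi_complementary_gray hamming_dist q n G))
       \<and> ((\<exists>H. is_gray_ordering (lee_dist q) q (n - 1) H \<and>
            H 0 = replicate (n - 1) 0 \<and> H (q ^ (n - 1) - 1) = replicate (n - 1) 1)
          \<longrightarrow> (\<exists>G. quasi_complementary_gray (lee_dist q) q n G))"
proof -
  have n: "n = Suc (n - 1)" using assms by simp
  show ?thesis
  proof (intro conjI impI)
    assume "\<exists>H. is_gray_ordering hamming_dist q (n - 1) H \<and>
            H 0 = replicate (n - 1) 0 \<and> H (q ^ (n - 1) - 1) = replicate (n - 1) 1"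
    then obtain H where "is_gray_ordering hamming_dist q (n - 1) H"
      "H 0 = replicate (n - 1) 0" "H (q ^ (n - 1) - 1) = replicate (n - 1) 1" by blast
    have "\<exists>G. quasi_complementary_gray hamming_dist q (Suc (n - 1)) G"
      apply (rule gen[OF assms(1) \<open>is_gray_ordering hamming_dist q (n - 1) H\<close> \<open>H 0 = replicate (n - 1) 0\<close> \<open>H (q ^ (n - 1) - 1) = replicate (n - 1) 1\<close>])
       apply (erule (1) ham_sh)
      apply (erule ham_st)
      done
    then show "\<exists>G. quasi_complementary_gray hamming_dist q n G" by (simp only: n[symmetric])
  next
    assume "\<exists>H. is_gray_ordering (lee_dist q) q (n - 1) H \<and>
            H 0 = replicate (n - 1) 0 \<and> H (q ^ (n - 1) - 1) = replicate (n - 1) 1"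
    then obtain H where "is_gray_ordering (lee_dist q) q (n - 1) H"
      "H 0 = replicate (n - 1) 0" "H (q ^ (n - 1) - 1) = replicate (n - 1) 1" by blast
    have "\<exists>G. quasi_complementary_gray (lee_dist q) q (Suc (n - 1)) G"
      apply (rule gen[OF assms(1) \<open>is_gray_ordering (lee_dist q) q (n - 1) H\<close> \<open>H 0 = replicate (n - 1) 0\<close> \<open>H (q ^ (n - 1) - 1) = replicate (n - 1) 1\<close>])
       apply (erule (1) lee_sh)
      apply (erule (1) lee_st)
      done
    then show "\<exists>G. quasi_complementary_gray (lee_dist q) q n G" by (simp only: n[symmetric])
  qed
qed

end
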